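(* Let $G$ be a graph containing a cycle $C_n$ as a subgraph, where $n\ge 5$ is an integer not divisible by $4$. Then $G$ is a $4$-$\chi_\rho$-critical graph if and only if $G$ is isomorphic to $C_n$.
   Context: Graphs are finite and simple. A $k$-packing coloring of $G$ is a map $c:V(G)\to\{1,\ldots,k\}$ such that two distinct vertices $u,v$ with $c(u)=c(v)=i$ satisfy $d_G(u,v)>i$ (distance between vertices in different components is infinite); $\chi_\rho(G)$ is the smallest $k$ for which such a coloring exists. $G$ is $\chi_\rho$-critical if $\chi_\rho(H)<\chi_\rho(G)$ for every proper subgraph $H$ of $G$, and $4$-$\chi_\rho$-critical if moreover $\chi_\rho(G)=4$. *)

theory Defs
  imports Main "HOL-Library.Extended_Nat"
begin

type_synonym 'a graph = "'a set \<times> 'a set set"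

definition verts :: "'a graph \<Rightarrow> 'a set" where "verts G = fst G"
definition edges :: "'a graph \<Rightarrow> 'a set set" where "edges G = snd G"

definition graph :: "'a graph \<Rightarrow> bool" where
  "graph G \<longleftrightarrow> finite (verts G) \<and>
     (\<forall>e\<in>edges G. \<exists>u v. e = {u, v} \<and> u \<noteq> v \<and> u \<in> verts G \<and> v \<in> verts G)"

definition subgraph :: "'a graph \<Rightarrow> 'a graph \<Rightarrow> bool" where
  "subgraph H G \<longleftrightarrow> graph H \<and> graph G \<and> verts H \<subseteq> verts G \<and> edges H \<subseteq> edges G"

definition proper_subgraph :: "'a graph \<Rightarrow> 'a graph \<Rightarrow> bool" where
  "proper_subgraph H G \<longleftrightarrow> subgraph H G \<and> H \<noteq> G"

text \<open>A walk of length k from u to v: a vertex list with k+1 entries, consecutive ones adjacent.\<close>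
definition is_walk :: "'a graph \<Rightarrow> 'a list \<Rightarrow> bool" where
  "is_walk G xs \<longleftrightarrow> xs \<noteq> [] \<and> set xs \<subseteq> verts G \<and>
     (\<forall>i. Suc i < length xs \<longrightarrow> {xs ! i, xs ! Suc i} \<in> edges G)"

text \<open>Distance; infinite if no walk exists (different components).\<close>
definition dist :: "'a graph \<Rightarrow> 'a \<Rightarrow> 'a \<Rightarrow> enat" where
  "dist G u v = (INF xs \<in> {xs. is_walk G xs \<and> hd xs = u \<and> last xs = v}. enat (length xs - 1))"

definition packing_coloring :: "'a graph \<Rightarrow> nat \<Rightarrow> ('a \<Rightarrow> nat) \<Rightarrow> bool" where
  "packing_coloring G k c \<longleftrightarrow>
     (\<forall>v\<in>verts G. c v \<in> {1..k}) \<and>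
     (\<forall>u\<in>verts G. \<forall>v\<in>verts G. u \<noteq> v \<and> c u = c v \<longrightarrow> enat (c u) < dist G u v)"

definition packing_chromatic :: "'a graph \<Rightarrow> nat" where
  "packing_chromatic G = (LEAST k. \<exists>c. packing_coloring G k c)"

definition packing_critical :: "'a graph \<Rightarrow> bool" where
  "packing_critical G \<longleftrightarrow>
     (\<forall>H. proper_subgraph H G \<longrightarrow> packing_chromatic H < packing_chromatic G)"

definition packing_4_critical :: "'a graph \<Rightarrow> bool" where
  "packing_4_critical G \<longleftrightarrow> packing_critical G \<and> packing_chromatic G = 4"

definition graph_iso :: "'a graph \<Rightarrow> 'b graph \<Rightarrow> bool" where
  "graph_iso G H \<longleftrightarrow> (\<exists>f. bij_betw f (verts G) (verts H) \<and>
     (\<forall>u\<in>verts G. \<forall>v\<in>verts G. {u, v} \<in> edges G \<longleftrightarrow> {f u, f v} \<in> edges H))"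

definition cycle_graph :: "nat \<Rightarrow> nat graph" where
  "cycle_graph n = ({0..<n}, {{i, (i + 1) mod n} | i. i < n})"

end

theory Submission
  imports Defs
begin


lemma comb6:
  fixes a0 a1 a2 a3 a4 a5 :: nat
  assumes "a0 \<in> {1,2,3}" "a1 \<in> {1,2,3}" "a2 \<in> {1,2,3}" "a3 \<in> {1,2,3}" "a4 \<in> {1,2,3}" "a5 \<in> {1,2,3}"
   "a0 \<noteq> a1" "a1 \<noteq> a2" "a2 \<noteq> a3" "a3 \<noteq> a4" "a4 \<noteq> a5"
   "a0 = a2 \<longrightarrow> a0 = 1" "a1 = a3 \<longrightarrow> a1 = 1" "a2 = a4 \<longrightarrow> a2 = 1" "a3 = a5 \<longrightarrow> a3 = 1"
   "a0 = a3 \<longrightarrow> a0 \<noteq> 3" "a2 = a5 \<longrightarrow> a2 \<noteq> 3"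
  shows "a2 = 1 \<or> a3 = 1"
  using assms unfolding insert_iff empty_iff by presburger

lemma comb5:
  fixes a0 a1 a2 a3 a4 :: nat
  assumes "a0 \<in> {1,2,3}" "a1 \<in> {1,2,3}" "a2 \<in> {1,2,3}" "a3 \<in> {1,2,3}" "a4 \<in> {1,2,3}"
   "a0 \<noteq> a1" "a1 \<noteq> a2" "a2 \<noteq> a3" "a3 \<noteq> a4"
   "a0 = a2 \<longrightarrow> a0 = 1" "a2 = a4 \<longrightarrow> a2 = 1"
   "a0 = 1 \<or> a1 = 1" "a1 = 1 \<or> a2 = 1" "a2 = 1 \<or> a3 = 1" "a3 = 1 \<or> a4 = 1"
  shows "a4 = a0"
  using assms unfolding insert_iff empty_iff by presburger

lemma comb:
  fixes d :: "nat \<Rightarrow> nat"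
  assumes R: "\<And>j. d j \<in> {1,2,3}" and A: "\<And>j. d j \<noteq> d (Suc j)"
    and B: "\<And>j. d j = d (j+2) \<Longrightarrow> d j = 1"
    and C: "\<And>j. d j = d (j+3) \<Longrightarrow> d j \<noteq> 3"
    and P: "\<And>j. d (j+n) = d j" and n: "n \<ge> 5"
  shows "4 dvd n"
proof -
  have a: "d (j+k) \<noteq> d (j+(k+1))" for j k using A[of "j+k"] by simp
  have b: "d (j+k) = d (j+(k+2)) \<longrightarrow> d (j+k) = 1" for j k using B[of "j+k"] by (simp add: add.assoc)
  have c: "d (j+k) = d (j+(k+3)) \<longrightarrow> d (j+k) \<noteq> 3" for j k using C[of "j+k"] by (simp add: add.assoc)
  have S1: "d (j+2) = 1 \<or> d (j+3) = 1" for j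
  proof -
    define e where "e k = d (j+k)" for k
    have ea: "e k \<noteq> e (k+1)" and eb: "e k = e (k+2) \<longrightarrow> e k = 1" and ec: "e k = e (k+3) \<longrightarrow> e k \<noteq> 3"
      and eR: "e k \<in> {1,2,3}" for k
      using a[of j k] b[of j k] c[of j k] R[of "j+k"] unfolding e_def by auto
    have "e 2 = 1 \<or> e 3 = 1"
      apply (rule comb6[of "e 0" "e 1" "e 2" "e 3" "e 4" "e 5"])
      using eR ea[of 0] ea[of 1] ea[of 2] ea[of 3] ea[of 4] eb[of 0] eb[of 1] eb[of 2] eb[of 3]
        ec[of 0] ec[of 2] by (simp_all add: numeral_eq_Suc)
    then show ?thesis unfolding e_def by simp
  qed
  have S2: "d j = 1 \<or> d (Suc j) = 1" for j
  proof -
    have "d (j+n-2+2) = 1 \<or> d (j+n-2+3) = 1" by (rule S1)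
    moreover have "j+n-2+2 = j+n" "j+n-2+3 = Suc j + n" using n by auto
    ultimately show ?thesis using P by metis
  qed
  have S2': "d (j+k) = 1 \<or> d (j+(k+1)) = 1" for j k using S2[of "j+k"] by simp
  have S3: "d (j+4) = d j" for j
  proof -
    define e where "e k = d (j+k)" for k
    have ea: "e k \<noteq> e (k+1)" and eb: "e k = e (k+2) \<longrightarrow> e k = 1" and e2: "e k = 1 \<or> e (k+1) = 1"
      and eR: "e k \<in> {1,2,3}" for k
      using a[of j k] b[of j k] S2'[of j k] R[of "j+k"] unfolding e_def by auto
    have "e 4 = e 0"
      apply (rule comb5[of "e 0" "e 1" "e 2" "e 3" "e 4"])
      using eR ea[of 0] ea[of 1] ea[of 2] ea[of 3] eb[of 0] eb[of 2]
        e2[of 0] e2[of 1] e2[of 2] e2[of 3] by (simp_all add: numeral_eq_Suc)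
    then show ?thesis unfolding e_def by simp
  qed
  have S4: "d (j + 4*m) = d j" for j m
  proof (induction m)
    case (Suc m)
    have "d (j + 4 * Suc m) = d (j + 4*m + 4)" by (simp add: algebra_simps)
    also have "\<dots> = d (j + 4*m)" by (rule S3)
    finally show ?case using Suc by simp
  qed simp
  have S5: "d (j + n mod 4) = d j" for j
  proof -
    have "d (j + n mod 4) = d (j + n mod 4 + 4 * (n div 4))" by (rule S4[symmetric])
    also have "j + n mod 4 + 4 * (n div 4) = j + n" by simp
    finally show ?thesis using P by simp
  qed
  show ?thesis
  proof (rule ccontr)
    assume nd: "\<not> 4 dvd n"
    then have "n mod 4 = 1 \<or> n mod 4 = 2 \<or> n mod 4 = 3" by presburger
    then show False
    proof (elim disjE)
      assume "n mod 4 = 1" then show False using S5[of 0] A[of 0] by simp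
    next
      assume h: "n mod 4 = 2"
      have e1: "0 + n mod 4 = 0 + 2" "1 + n mod 4 = 1 + 2" using h by simp_all
      have "d (0+2) = d 0" "d (1+2) = d 1" using S5[of 0] S5[of 1] unfolding e1 by simp_all
      then have "d 0 = 1" "d 1 = 1" using B[of 0] B[of 1] by metis+
      then show False using A[of 0] by simp
    next
      assume h: "n mod 4 = 3"
      have "d 1 = d 4" using S5[of 1] h by simp
      also have "d 4 = d 0" using S3[of 0] by simp
      finally show False using A[of 0] by simp
    qed
  qed
qed



lemma walk_inv:
  assumes w: "is_walk G xs"
    and base: "\<And>x. x \<in> verts G \<Longrightarrow> Q x x 0"
    and step: "\<And>x y z L. Q x y L \<Longrightarrow> y \<in> verts G \<Longrightarrow> z \<in> verts G \<Longrightarrow> {y,z} \<in> edges G \<Longrightarrow> Q x z (Suc L)"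
  shows "Q (hd xs) (last xs) (length xs - 1)"
proof -
  have ne: "xs \<noteq> []" and sub: "set xs \<subseteq> verts G" and ed: "\<And>i. Suc i < length xs \<Longrightarrow> {xs ! i, xs ! Suc i} \<in> edges G"
    using w unfolding is_walk_def by auto
  have "m < length xs \<longrightarrow> Q (xs!0) (xs!m) m" for m
  proof (induction m)
    case 0
    then show ?case using base sub ne by (simp add: subset_iff)
  next
    case (Suc m)
    show ?case
    proof
      assume m: "Suc m < length xs"
      then have "Q (xs!0) (xs!m) m" using Suc by simp
      moreover have "xs!m \<in> verts G" "xs!Suc m \<in> verts G" using m sub nth_mem[of m xs] nth_mem[of "Suc m" xs] by auto
      ultimately show "Q (xs!0) (xs!Suc m) (Suc m)" using step ed[OF m] by blast
    qed
  qed
  then have "Q (xs!0) (xs!(length xs - 1)) (length xs - 1)" using ne by simp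
  then show ?thesis using ne by (simp add: hd_conv_nth last_conv_nth)
qed

lemma dist_gt:
  assumes "\<And>xs. is_walk G xs \<Longrightarrow> hd xs = u \<Longrightarrow> last xs = v \<Longrightarrow> k < length xs - 1"
  shows "enat k < dist G u v"
proof -
  have "enat (Suc k) \<le> dist G u v"
    unfolding dist_def by (rule INF_greatest) (use assms in \<open>auto simp: Suc_le_eq\<close>)
  then show ?thesis by (metis Suc_ile_eq)
qed

lemma dist_le:
  assumes "is_walk G xs" "hd xs = u" "last xs = v"
  shows "dist G u v \<le> enat (length xs - 1)"
  unfolding dist_def by (rule INF_lower) (use assms in auto)

lemma chi_le: "packing_coloring G k c \<Longrightarrow> packing_chromatic G \<le> k"
  unfolding packing_chromatic_def by (rule Least_le) blast

lemma coloring_mono: "packing_coloring G k c \<Longrightarrow> k \<le> k' \<Longrightarrow> packing_coloring G k' c"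
  unfolding packing_coloring_def by auto

lemma chi_ex:
  assumes "graph G"
  shows "\<exists>c. packing_coloring G (packing_chromatic G) c"
proof -
  have "finite (verts G)" using assms unfolding graph_def by simp
  then obtain h where h: "bij_betw h (verts G) {0..<card (verts G)}" using ex_bij_betw_finite_nat by blast
  have "packing_coloring G (card (verts G)) (\<lambda>v. Suc (h v))"
    unfolding packing_coloring_def
  proof (intro conjI ballI impI)
    fix v assume "v \<in> verts G"
    then have "h v \<in> {0..<card (verts G)}" using h by (auto simp: bij_betw_def)
    then show "Suc (h v) \<in> {1..card (verts G)}" by auto
  next
    fix u v assume "u \<in> verts G" "v \<in> verts G" "u \<noteq> v \<and> Suc (h u) = Suc (h v)"
    then show "enat (Suc (h u)) < dist G u v" using h by (auto simp: bij_betw_def inj_on_def)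
  qed
  then have "\<exists>k c. packing_coloring G k c" by blast
  then show ?thesis unfolding packing_chromatic_def by (rule LeastI_ex)
qed



lemma Suc_mod_lt: "k < n \<Longrightarrow> Suc k mod n = (if Suc k = n then 0 else Suc k)"
  by (simp add: mod_Suc)

definition col4 :: "nat \<Rightarrow> nat \<Rightarrow> nat" where
  "col4 n j = (if j = n - 1 then 4 else if j mod 2 = 0 then 1 else if j mod 4 = 1 then 2 else 3)"

definition pat3 :: "nat \<Rightarrow> nat" where
  "pat3 j = (if j mod 2 = 0 then 1 else if j mod 4 = 1 then 2 else 3)"

lemma mod2_sep: "(a::nat) mod 2 = b mod 2 \<Longrightarrow> a \<noteq> b \<Longrightarrow> a + 2 \<le> b \<or> b + 2 \<le> a"
  by presburger
lemma mod4_sep: "(a::nat) mod 4 = b mod 4 \<Longrightarrow> a \<noteq> b \<Longrightarrow> a + 4 \<le> b \<or> b + 4 \<le> a"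
  by presburger
lemma odd4: "a mod 2 \<noteq> (0::nat) \<Longrightarrow> a mod 4 = 1 \<or> a mod 4 = 3" by presburger
lemma pat_cases: "pat3 a = 1 \<and> a mod 2 = 0 \<or> pat3 a = 2 \<and> a mod 4 = 1 \<or> pat3 a = 3 \<and> a mod 4 = 3"
  using odd4[of a] unfolding pat3_def by auto
lemma pat_arith:
  assumes "pat3 a = pat3 b" "a \<noteq> b" "b \<le> a + L" "a \<le> b + L"
  shows "pat3 a < L"
proof -
  have "pat3 a = 1 \<and> a + 2 \<le> b \<or> pat3 a = 1 \<and> b + 2 \<le> a \<or> pat3 a \<le> 3 \<and> a + 4 \<le> b \<or> pat3 a \<le> 3 \<and> b + 4 \<le> a"
    using pat_cases[of a] pat_cases[of b] mod2_sep[of a b] mod4_sep[of a b] assms(1,2) by auto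
  then show ?thesis using assms(3,4) by linarith
qed
lemma pat_le: "pat3 i \<le> i + 1"
  unfolding pat3_def by presburger

lemma pat_ge: "pat3 i \<ge> 1"
  unfolding pat3_def by simp

lemma col_small:
  assumes "i < n" "j < n" "i \<noteq> j" "col4 n i = col4 n j"
  shows "i < n - 1 \<and> j < n - 1 \<and> pat3 i = pat3 j \<and> col4 n i = pat3 i"
proof -
  have "i \<noteq> n - 1 \<or> j \<noteq> n - 1" using assms by auto
  then have "i \<noteq> n - 1 \<and> j \<noteq> n - 1" using assms(4) unfolding col4_def by (auto split: if_splits)
  then show ?thesis using assms unfolding col4_def pat3_def by auto
qed

lemma col_arith:
  fixes i j n L :: nat and s m :: int
  assumes "i < n" "j < n" "i \<noteq> j" "col4 n i = col4 n j" "int j = int i + s + m"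
    "m = 0 \<or> m \<ge> int n \<or> m \<le> - int n" "\<bar>s\<bar> \<le> int L"
  shows "col4 n i < L"
proof -
  note cs = col_small[OF assms(1-4)]
  show ?thesis using assms(6)
  proof (elim disjE)
    assume "m = 0"
    then have "j \<le> i + L" "i \<le> j + L" using assms(5,7) by linarith+
    then show ?thesis using pat_arith[of i j L] cs assms(3) by simp
  next
    assume "m \<ge> int n"
    then show ?thesis using pat_le[of i] cs assms(5,7) by linarith
  next
    assume "m \<le> - int n"
    then show ?thesis using pat_le[of j] cs assms(5,7) by linarith
  qed
qed



locale cyc =
  fixes G :: "'a graph" and n :: nat and f :: "'a \<Rightarrow> nat"
  assumes G: "graph G" and n5: "5 \<le> n"
    and nd: "\<not> 4 dvd n" and bij: "bij_betw f (verts G) {0..<n}"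
    and E: "\<forall>u\<in>verts G. \<forall>v\<in>verts G. {u,v} \<in> edges G \<longleftrightarrow> {f u, f v} \<in> edges (cycle_graph n)"
begin

lemma f_lt: "v \<in> verts G \<Longrightarrow> f v < n"
  using bij by (auto simp: bij_betw_def)

lemma f_inj: "u \<in> verts G \<Longrightarrow> v \<in> verts G \<Longrightarrow> f u = f v \<Longrightarrow> u = v"
  using bij by (auto simp: bij_betw_def inj_on_def)

definition g where "g = inv_into (verts G) f"

lemma g_in: "j < n \<Longrightarrow> g j \<in> verts G"
  unfolding g_def using bij_betw_inv_into[OF bij] by (auto simp: bij_betw_def)

lemma f_g: "j < n \<Longrightarrow> f (g j) = j"
  unfolding g_def using bij by (auto simp: bij_betw_def intro: f_inv_into_f)

lemma g_inj: "i < n \<Longrightarrow> j < n \<Longrightarrow> g i = g j \<Longrightarrow> i = j"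
  using f_g by metis

lemma cyc_edge_iff:
  assumes "a < n" "b < n"
  shows "{a,b} \<in> edges (cycle_graph n) \<longleftrightarrow> b = Suc a mod n \<or> a = Suc b mod n"
proof
  assume "{a,b} \<in> edges (cycle_graph n)"
  then obtain i where "i < n" "{a,b} = {i, Suc i mod n}" unfolding cycle_graph_def edges_def by auto
  then show "b = Suc a mod n \<or> a = Suc b mod n" by (auto simp: doubleton_eq_iff)
next
  assume "b = Suc a mod n \<or> a = Suc b mod n"
  then show "{a,b} \<in> edges (cycle_graph n)"
  proof
    assume "b = Suc a mod n"
    then show ?thesis using assms unfolding cycle_graph_def edges_def by auto
  next
    assume "a = Suc b mod n"
    then have "{a,b} = {b, (b+1) mod n}" by auto
    then show ?thesis using assms unfolding cycle_graph_def edges_def by auto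
  qed
qed

lemma edge_iff: "u \<in> verts G \<Longrightarrow> v \<in> verts G \<Longrightarrow> {u,v} \<in> edges G \<longleftrightarrow> f v = Suc (f u) mod n \<or> f u = Suc (f v) mod n"
  using E cyc_edge_iff f_lt by blast

lemma edge_g: "j < n \<Longrightarrow> {g j, g (Suc j mod n)} \<in> edges G"
proof -
  assume j: "j < n"
  have n0: "0 < n" using n5 by simp
  have "Suc j mod n < n" using n0 by simp
  then show ?thesis using edge_iff[OF g_in[OF j] g_in] f_g j by auto
qed

end

context cyc begin

lemma n0: "0 < n" using n5 by simp

lemma walk_g: "is_walk G (map (\<lambda>t. g ((j+t) mod n)) [0..<Suc k])"
  unfolding is_walk_def
proof (intro conjI allI impI)
  show "map (\<lambda>t. g ((j + t) mod n)) [0..<Suc k] \<noteq> []" by simp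
  show "set (map (\<lambda>t. g ((j + t) mod n)) [0..<Suc k]) \<subseteq> verts G"
    using g_in n0 by auto
  fix i assume "Suc i < length (map (\<lambda>t. g ((j + t) mod n)) [0..<Suc k])"
  then have i: "Suc i < Suc k" by simp
  have "(j + Suc i) mod n = Suc ((j+i) mod n) mod n" by (simp add: mod_Suc_eq)
  then have "{g ((j+i) mod n), g ((j + Suc i) mod n)} \<in> edges G" using edge_g[of "(j+i) mod n"] n0 by simp
  then show "{map (\<lambda>t. g ((j + t) mod n)) [0..<Suc k] ! i, map (\<lambda>t. g ((j + t) mod n)) [0..<Suc k] ! Suc i} \<in> edges G"
    using i by (simp del: upt_Suc)
qed

lemma dist_g: "dist G (g (j mod n)) (g ((j+k) mod n)) \<le> enat k"
proof -
  have "dist G (g (j mod n)) (g ((j+k) mod n)) \<le> enat (length (map (\<lambda>t. g ((j+t) mod n)) [0..<Suc k]) - 1)"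
    by (rule dist_le[OF walk_g]) (simp_all add: hd_map last_map del: upt_Suc)
  then show ?thesis by simp
qed

lemma no3:
  assumes c: "packing_coloring G 3 c"
  shows "4 dvd n"
proof -
  define d where "d j = c (g (j mod n))" for j
  have R: "d j \<in> {1,2,3}" for j
    using c g_in[of "j mod n"] n0 unfolding packing_coloring_def d_def by auto
  have key: "enat (d j) < enat k" if "0 < k" "k < n" "d j = d (j+k)" for j k
  proof -
    have ne: "(j+k) mod n \<noteq> j mod n"
    proof
      assume "(j+k) mod n = j mod n"
      then have "n dvd (j + k - j)" using mod_eq_dvd_iff_nat[of j "j+k" n] by simp
      then show False using that by (simp add: nat_dvd_not_less)
    qed
    let ?u = "g (j mod n)" and ?v = "g ((j+k) mod n)"
    have uv: "?u \<in> verts G" "?v \<in> verts G" using g_in n0 by auto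
    have "?u \<noteq> ?v" using g_inj[of "j mod n" "(j+k) mod n"] ne n0 by auto
    then have "enat (c ?u) < dist G ?u ?v" using c uv that(3) unfolding packing_coloring_def d_def by auto
    also have "\<dots> \<le> enat k" by (rule dist_g)
    finally show ?thesis unfolding d_def .
  qed
  have A: "d j \<noteq> d (Suc j)" for j
    using key[of 1 j] R[of j] n0 n5 by auto
  have B: "d j = d (j+2) \<Longrightarrow> d j = 1" for j
    using key[of 2 j] R[of j] n5 by auto
  have C: "d j = d (j+3) \<Longrightarrow> d j \<noteq> 3" for j
    using key[of 3 j] R[of j] n5 by auto
  have P: "d (j+n) = d j" for j unfolding d_def by simp
  show ?thesis by (rule comb[OF R A B C P n5])
qed

lemma chi_ge4: "packing_chromatic G \<ge> 4"
proof (rule ccontr)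
  assume "\<not> 4 \<le> packing_chromatic G"
  then have "packing_chromatic G \<le> 3" by simp
  moreover obtain c where "packing_coloring G (packing_chromatic G) c" using chi_ex[OF G] by blast
  ultimately have "packing_coloring G 3 c" using coloring_mono by blast
  then have "4 dvd n" by (rule no3)
  then show False using nd by simp
qed

end

context cyc begin

lemma step_int:
  assumes "y \<in> verts G" "z \<in> verts G" "{y,z} \<in> edges G"
  shows "int (f z) = int (f y) + 1 \<or> int (f z) = int (f y) + 1 - int n \<or>
         int (f z) = int (f y) - 1 \<or> int (f z) = int (f y) - 1 + int n"
proof -
  have lt: "f y < n" "f z < n" using assms f_lt by auto
  have "f z = Suc (f y) mod n \<or> f y = Suc (f z) mod n" using edge_iff assms by blast
  then show ?thesis using lt by (auto simp: Suc_mod_lt split: if_splits)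
qed

lemma coloring4: "packing_coloring G 4 (\<lambda>v. col4 n (f v))"
  unfolding packing_coloring_def
proof (intro conjI ballI impI)
  fix v assume "v \<in> verts G"
  show "col4 n (f v) \<in> {1..4}" unfolding col4_def by auto
next
  fix u v assume u: "u \<in> verts G" and v: "v \<in> verts G" and uv: "u \<noteq> v \<and> col4 n (f u) = col4 n (f v)"
  let ?Q = "\<lambda>x y L. \<exists>s t::int. \<bar>s\<bar> \<le> int L \<and> int (f y) = int (f x) + s + int n * t"
  show "enat (col4 n (f u)) < dist G u v"
  proof (rule dist_gt)
    fix xs assume w: "is_walk G xs" and h: "hd xs = u" and l: "last xs = v"
    have "?Q (hd xs) (last xs) (length xs - 1)"
    proof (rule walk_inv[OF w])
      fix x show "?Q x x 0" by (rule exI[of _ 0], rule exI[of _ 0]) simp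
    next
      fix x y z L assume Q: "?Q x y L" and yz: "y \<in> verts G" "z \<in> verts G" "{y,z} \<in> edges G"
      obtain s t where st: "\<bar>s\<bar> \<le> int L" "int (f y) = int (f x) + s + int n * t" using Q by blast
      from step_int[OF yz] show "?Q x z (Suc L)"
      proof (elim disjE)
        assume "int (f z) = int (f y) + 1"
        then show ?thesis using st by (intro exI[of _ "s+1"] exI[of _ t]) auto
      next
        assume "int (f z) = int (f y) + 1 - int n"
        then show ?thesis using st by (intro exI[of _ "s+1"] exI[of _ "t - 1"]) (auto simp: algebra_simps)
      next
        assume "int (f z) = int (f y) - 1"
        then show ?thesis using st by (intro exI[of _ "s - 1"] exI[of _ t]) auto
      next
        assume "int (f z) = int (f y) - 1 + int n"
        then show ?thesis using st by (intro exI[of _ "s - 1"] exI[of _ "t + 1"]) (auto simp: algebra_simps)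
      qed
    qed
    then obtain s t where st: "\<bar>s\<bar> \<le> int (length xs - 1)" "int (f v) = int (f u) + s + int n * t"
      using h l by blast
    have m: "int n * t = 0 \<or> int n * t \<ge> int n \<or> int n * t \<le> - int n"
    proof -
      have "t = 0 \<or> t \<ge> 1 \<or> t \<le> -1" by linarith
      then show ?thesis
      proof (elim disjE)
        assume "t \<ge> 1" then have "int n * 1 \<le> int n * t" by (intro mult_left_mono) auto
        then show ?thesis by simp
      next
        assume "t \<le> -1" then have "int n * t \<le> int n * (-1)" by (intro mult_left_mono) auto
        then show ?thesis by simp
      qed simp
    qed
    have "f u \<noteq> f v" using f_inj u v uv by blast
    then show "col4 n (f u) < length xs - 1"
      using col_arith[OF f_lt[OF u] f_lt[OF v] _ _ st(2) m st(1)] uv by blast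
  qed
qed

lemma chi4: "packing_chromatic G = 4"
  using chi_le[OF coloring4] chi_ge4 by simp

end

context cyc begin

lemma missing_edge:
  assumes "proper_subgraph H G"
  shows "\<exists>a b. a \<in> verts G \<and> b \<in> verts G \<and> f b = Suc (f a) mod n \<and> {a,b} \<notin> edges H"
proof -
  have sub: "graph H" "verts H \<subseteq> verts G" "edges H \<subseteq> edges G" "H \<noteq> G"
    using assms unfolding proper_subgraph_def subgraph_def by auto
  show ?thesis
  proof (cases "edges H = edges G")
    case False
    then obtain e where e: "e \<in> edges G" "e \<notin> edges H" using sub by blast
    then obtain u v where uv: "e = {u,v}" "u \<in> verts G" "v \<in> verts G" using G unfolding graph_def by blast
    then have "f v = Suc (f u) mod n \<or> f u = Suc (f v) mod n" using edge_iff e by blast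
    then show ?thesis
    proof
      assume "f v = Suc (f u) mod n" then show ?thesis using uv e by blast
    next
      assume "f u = Suc (f v) mod n" then show ?thesis using uv e by (metis insert_commute)
    qed
  next
    case True
    have "verts H \<noteq> verts G"
    proof
      assume "verts H = verts G"
      then have "H = G" using True unfolding verts_def edges_def by (simp add: prod_eq_iff)
      then show False using sub by simp
    qed
    then obtain w where w: "w \<in> verts G" "w \<notin> verts H" using sub by blast
    define b where "b = g (Suc (f w) mod n)"
    have bl: "Suc (f w) mod n < n" using n0 by simp
    have b: "b \<in> verts G" "f b = Suc (f w) mod n" unfolding b_def using g_in[OF bl] f_g[OF bl] by auto
    have "{w, b} \<notin> edges H"
    proof
      assume "{w,b} \<in> edges H"
      then obtain x y where "{w,b} = {x,y}" "x \<in> verts H" "y \<in> verts H" using sub(1) unfolding graph_def by blast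
      then show False using w by (auto simp: doubleton_eq_iff)
    qed
    then show ?thesis using w b by blast
  qed
qed

lemma sub3:
  assumes ps: "proper_subgraph H G"
  shows "packing_chromatic H \<le> 3"
proof -
  have sub: "graph H" "verts H \<subseteq> verts G" "edges H \<subseteq> edges G"
    using ps unfolding proper_subgraph_def subgraph_def by auto
  obtain a b where ab: "a \<in> verts G" "b \<in> verts G" "f b = Suc (f a) mod n" "{a,b} \<notin> edges H"
    using missing_edge[OF ps] by blast
  define p where "p v = (if f b \<le> f v then f v - f b else f v + n - f b)" for v
  have p_inj: "x \<in> verts G \<Longrightarrow> y \<in> verts G \<Longrightarrow> p x = p y \<Longrightarrow> x = y" for x y
    using f_inj f_lt[of x] f_lt[of y] f_lt[of b] ab(2) unfolding p_def by (auto split: if_splits)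
  have orient: "p y = Suc (p x)" if xy: "x \<in> verts G" "y \<in> verts G" "f y = Suc (f x) mod n" "{x,y} \<noteq> {a,b}" for x y
  proof -
    have "x \<noteq> a"
    proof
      assume "x = a"
      then have "f y = f b" using xy ab by simp
      then have "y = b" using f_inj xy ab by blast
      then show False using xy \<open>x = a\<close> by simp
    qed
    then have "f x \<noteq> f a" using f_inj xy ab by blast
    then show ?thesis using xy ab f_lt[of x] f_lt[of y] f_lt[of a] f_lt[of b] unfolding p_def
      by (auto simp: Suc_mod_lt split: if_splits)
  qed
  have hedge: "p y = Suc (p x) \<or> p x = Suc (p y)" if "x \<in> verts H" "y \<in> verts H" "{x,y} \<in> edges H" for x y
  proof -
    have xy: "x \<in> verts G" "y \<in> verts G" "{x,y} \<in> edges G" using that sub by auto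
    have ne: "{x,y} \<noteq> {a,b}" "{y,x} \<noteq> {a,b}" using that ab by (auto simp: insert_commute)
    have "f y = Suc (f x) mod n \<or> f x = Suc (f y) mod n" using edge_iff xy by blast
    then show ?thesis using orient xy ne by blast
  qed
  have col: "packing_coloring H 3 (\<lambda>v. pat3 (p v))"
    unfolding packing_coloring_def
  proof (intro conjI ballI impI)
    fix v assume "v \<in> verts H"
    show "pat3 (p v) \<in> {1..3}" unfolding pat3_def by auto
  next
    fix u v assume u: "u \<in> verts H" and v: "v \<in> verts H" and uv: "u \<noteq> v \<and> pat3 (p u) = pat3 (p v)"
    let ?Q = "\<lambda>x y L. p y \<le> p x + L \<and> p x \<le> p y + L"
    show "enat (pat3 (p u)) < dist H u v"
    proof (rule dist_gt)
      fix xs assume w: "is_walk H xs" and h: "hd xs = u" and l: "last xs = v"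
      have "?Q (hd xs) (last xs) (length xs - 1)"
      proof (rule walk_inv[OF w])
        fix x show "?Q x x 0" by simp
      next
        fix x y z L assume "?Q x y L" "y \<in> verts H" "z \<in> verts H" "{y,z} \<in> edges H"
        then show "?Q x z (Suc L)" using hedge[of y z] by auto
      qed
      moreover have "p u \<noteq> p v" using p_inj u v uv sub by blast
      ultimately show "pat3 (p u) < length xs - 1" using pat_arith[of "p u" "p v"] uv h l by blast
    qed
  qed
  show ?thesis by (rule chi_le[OF col])
qed

end

theorem proposition3p2:
  fixes G :: "'a graph" and n :: nat
  assumes "graph G"
    and "n \<ge> 5" and "\<not> 4 dvd n"
    and "\<exists>H. subgraph H G \<and> graph_iso H (cycle_graph n)"
  shows "packing_4_critical G \<longleftrightarrow> graph_iso G (cycle_graph n)"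
proof
  assume iso: "graph_iso G (cycle_graph n)"
  then obtain f where f: "bij_betw f (verts G) (verts (cycle_graph n))"
    "\<forall>u\<in>verts G. \<forall>v\<in>verts G. {u, v} \<in> edges G \<longleftrightarrow> {f u, f v} \<in> edges (cycle_graph n)"
    unfolding graph_iso_def by blast
  have "verts (cycle_graph n) = {0..<n}" unfolding cycle_graph_def verts_def by simp
  then interpret cyc G n f using assms f by unfold_locales auto
  show "packing_4_critical G"
    unfolding packing_4_critical_def packing_critical_def using chi4 sub3 by fastforce
next
  assume crit: "packing_4_critical G"
  obtain H where H: "subgraph H G" "graph_iso H (cycle_graph n)" using assms(4) by blast
  then obtain f where f: "bij_betw f (verts H) (verts (cycle_graph n))"
    "\<forall>u\<in>verts H. \<forall>v\<in>verts H. {u, v} \<in> edges H \<longleftrightarrow> {f u, f v} \<in> edges (cycle_graph n)"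
    unfolding graph_iso_def by blast
  have "verts (cycle_graph n) = {0..<n}" unfolding cycle_graph_def verts_def by simp
  moreover have "graph H" using H unfolding subgraph_def by simp
  ultimately interpret cyc H n f using assms f by unfold_locales auto
  show "graph_iso G (cycle_graph n)"
  proof (rule ccontr)
    assume "\<not> graph_iso G (cycle_graph n)"
    then have "H \<noteq> G" using H by auto
    then have "proper_subgraph H G" using H unfolding proper_subgraph_def by simp
    then have "packing_chromatic H < packing_chromatic G" using crit
      unfolding packing_4_critical_def packing_critical_def by blast
    then show False using chi4 crit unfolding packing_4_critical_def by simp
  qed
qed

end
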